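(* Let $\alpha=(\alpha_n)_{n\in\mathbb{N}}\in\ell^2$. The Rhaly operator $R_\alpha$ is compact on $\ell^2$ if and only if $\lim_{k\to\infty}\sigma_k=0$.
   Context: $\mathbb{N}=\{0,1,2,\dots\}$; $\ell^2$ is the space of square-summable functions $\mathbb{N}\to\mathbb{C}$. The Rhaly operator is $(R_\alpha f)(k)=\alpha_k\sum_{j=0}^k f(j)$. For $k\in\mathbb{N}$, $\sigma_k=\big(\sum_{j=2^k}^{2^{k+1}-1}(j+1)|\alpha_j|^2\big)^{1/2}$. *)

theory Defs
  imports "HOL-Analysis.Analysis"
begin

definition in_l2 :: "(nat \<Rightarrow> complex) \<Rightarrow> bool" where
  "in_l2 f \<longleftrightarrow> summable (\<lambda>n. (cmod (f n))\<^sup>2)"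

definition l2_norm :: "(nat \<Rightarrow> complex) \<Rightarrow> real" where
  "l2_norm f = sqrt (\<Sum>n. (cmod (f n))\<^sup>2)"

definition rhaly :: "(nat \<Rightarrow> complex) \<Rightarrow> (nat \<Rightarrow> complex) \<Rightarrow> (nat \<Rightarrow> complex)" where
  "rhaly \<alpha> f = (\<lambda>k. \<alpha> k * (\<Sum>j\<le>k. f j))"

definition compact_op_l2 :: "((nat \<Rightarrow> complex) \<Rightarrow> (nat \<Rightarrow> complex)) \<Rightarrow> bool" where
  "compact_op_l2 T \<longleftrightarrow>
     (\<forall>f. in_l2 f \<longrightarrow> in_l2 (T f)) \<and>
     (\<forall>x :: nat \<Rightarrow> nat \<Rightarrow> complex. (\<forall>n. in_l2 (x n)) \<and> (\<exists>B. \<forall>n. l2_norm (x n) \<le> B) \<longrightarrow>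
        (\<exists>r g. strict_mono r \<and> in_l2 g \<and>
               (\<lambda>n. l2_norm (T (x (r n)) - g)) \<longlonglongrightarrow> 0))"

definition sigma :: "(nat \<Rightarrow> complex) \<Rightarrow> nat \<Rightarrow> real" where
  "sigma \<alpha> k = sqrt (\<Sum>j = 2^k..2^(k+1) - 1. real (j + 1) * (cmod (\<alpha> j))\<^sup>2)"

end

theory Submission
  imports Defs "HOL-Library.Diagonal_Subsequence"
begin


lemma sum_inv_sqrt: "(\<Sum>j\<le>k. 1 / sqrt (real j + 1)) \<le> 2 * sqrt (real k + 1)"
proof (induction k)
  case 0 then show ?case by simp
next
  case (Suc k)
  define s where "s = sqrt (real k + 1)"
  define t where "t = sqrt (real k + 2)"
  have s2: "s^2 = real k + 1" unfolding s_def by simp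
  have t2: "t^2 = real k + 2" unfolding t_def by simp
  have sp: "s \<ge> 0" and tp: "t > 0" unfolding s_def t_def by auto
  have "2 * s * t \<le> s^2 + t^2" using sum_squares_bound[of s t] by simp
  hence "2 * s * t + 1 \<le> 2 * t^2" using s2 t2 by simp
  moreover have "(2 * s + 1 / t) * t = 2 * s * t + 1" using tp by (simp add: field_simps)
  ultimately have "(2 * s + 1 / t) * t \<le> 2 * t * t" by (simp add: power2_eq_square)
  hence key: "2 * s + 1 / t \<le> 2 * t" using tp by (metis mult_le_cancel_right_pos)
  have "(\<Sum>j\<le>Suc k. 1 / sqrt (real j + 1)) = (\<Sum>j\<le>k. 1 / sqrt (real j + 1)) + 1 / t"
    by (simp add: t_def add.commute add.left_commute)
  also have "\<dots> \<le> 2 * s + 1 / t" using Suc s_def by simp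
  also have "\<dots> \<le> 2 * t" by (rule key)
  finally show ?case by (simp add: t_def add.commute add.left_commute)
qed

lemma cs_partial:
  fixes d :: "nat \<Rightarrow> complex"
  shows "(cmod (\<Sum>j\<le>k. d j))^2 \<le> 2 * sqrt (real k + 1) * (\<Sum>j\<le>k. sqrt (real j + 1) * (cmod (d j))^2)"
proof -
  define u where "u j = sqrt (sqrt (real j + 1)) * cmod (d j)" for j
  define v where "v j = 1 / sqrt (sqrt (real j + 1))" for j
  have uv: "cmod (d j) = u j * v j" for j
    unfolding u_def v_def by (simp add: field_simps)
  have u2: "(u j)^2 = sqrt (real j + 1) * (cmod (d j))^2" for j
    unfolding u_def by (simp add: power_mult_distrib)
  have v2: "(v j)^2 = 1 / sqrt (real j + 1)" for j
    unfolding v_def by (simp add: power_divide)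
  have "cmod (\<Sum>j\<le>k. d j) \<le> (\<Sum>j\<le>k. cmod (d j))" by (rule norm_sum)
  hence "(cmod (\<Sum>j\<le>k. d j))^2 \<le> (\<Sum>j\<le>k. cmod (d j))^2"
    by (simp add: power_mono)
  also have "\<dots> = (\<Sum>j\<le>k. u j * v j)^2" by (simp add: uv)
  also have "\<dots> \<le> (\<Sum>j\<le>k. (u j)^2) * (\<Sum>j\<le>k. (v j)^2)" by (rule Cauchy_Schwarz_ineq_sum)
  also have "\<dots> = (\<Sum>j\<le>k. sqrt (real j + 1) * (cmod (d j))^2) * (\<Sum>j\<le>k. 1 / sqrt (real j + 1))"
    by (simp add: u2 v2)
  also have "\<dots> \<le> (\<Sum>j\<le>k. sqrt (real j + 1) * (cmod (d j))^2) * (2 * sqrt (real k + 1))"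
    by (intro mult_left_mono sum_inv_sqrt sum_nonneg) auto
  finally show ?thesis by (simp add: mult_ac)
qed



lemma sigma_sq: "(sigma \<alpha> m)^2 = (\<Sum>j\<in>{2^m..<2^(m+1)}. real (j+1) * (cmod (\<alpha> j))^2)"
proof -
  have "Suc (2^(m+1)-1) = (2::nat)^(m+1)" by simp
  hence "{2^m..2^(m+1)-1} = {(2::nat)^m..<2^(m+1)}" by (metis atLeastLessThanSuc_atLeastAtMost)
  moreover have "(\<Sum>j\<in>{2^m..<2^(m+1)}. real (j+1) * (cmod (\<alpha> j))^2) \<ge> 0" by (intro sum_nonneg) auto
  ultimately show ?thesis unfolding sigma_def by simp
qed

lemma block_bound:
  "(\<Sum>k\<in>{2^m..<2^(m+1)}. (cmod (\<alpha> k))^2 * sqrt (real k + 1)) \<le> (sigma \<alpha> m)^2 / sqrt (2^m)"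
proof -
  have "(\<Sum>k\<in>{2^m..<2^(m+1)}. (cmod (\<alpha> k))^2 * sqrt (real k + 1))
      \<le> (\<Sum>k\<in>{2^m..<2^(m+1)}. real (k+1) * (cmod (\<alpha> k))^2 / sqrt (2^m))"
  proof (rule sum_mono)
    fix k assume k: "k \<in> {2^m..<(2::nat)^(m+1)}"
    have q: "sqrt (2^m) > 0" by simp
    have "(2::real)^m \<le> real k + 1" using k
      by (metis atLeastLessThan_iff le_SucI numeral_power_le_of_nat_cancel_iff of_nat_Suc add.commute)
    hence le: "sqrt (2^m) \<le> sqrt (real k + 1)" by (rule real_sqrt_le_mono)
    have "sqrt (real k + 1) * sqrt (2^m) \<le> sqrt (real k + 1) * sqrt (real k + 1)"
      by (intro mult_left_mono le) auto
    also have "\<dots> = real k + 1" by simp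
    finally have "sqrt (real k + 1) \<le> (real k + 1) / sqrt (2^m)" using q by (simp add: field_simps)
    hence "(cmod (\<alpha> k))^2 * sqrt (real k + 1) \<le> (cmod (\<alpha> k))^2 * ((real k + 1) / sqrt (2^m))"
      by (intro mult_left_mono) auto
    thus "(cmod (\<alpha> k))^2 * sqrt (real k + 1) \<le> real (k+1) * (cmod (\<alpha> k))^2 / sqrt (2^m)"
      by (simp add: field_simps)
  qed
  also have "\<dots> = (sigma \<alpha> m)^2 / sqrt (2^m)"
    by (simp add: sigma_sq sum_divide_distrib)
  finally show ?thesis .
qed

lemma sqrt2_ge: "sqrt 2 \<ge> 4/3"
  by (rule real_le_rsqrt) (simp add: power2_eq_square)

lemma dyadic_bound:
  assumes hyp: "\<forall>m\<ge>M. (sigma \<alpha> m)^2 \<le> \<epsilon>"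
  shows "m \<ge> M \<Longrightarrow> (\<Sum>k\<in>{2^m..<2^(m+n)}. (cmod (\<alpha> k))^2 * sqrt (real k + 1)) \<le> 4 * \<epsilon> / sqrt (2^m)"
proof (induction n arbitrary: m)
  case 0
  have "\<epsilon> \<ge> 0" using hyp by (metis order.trans order_refl zero_le_power2)
  thus ?case by simp
next
  case (Suc n)
  have e0: "\<epsilon> \<ge> 0" using hyp by (metis order.trans order_refl zero_le_power2)
  have split: "(\<Sum>k\<in>{2^m..<2^(m+Suc n)}. (cmod (\<alpha> k))^2 * sqrt (real k + 1))
     = (\<Sum>k\<in>{2^m..<2^(m+1)}. (cmod (\<alpha> k))^2 * sqrt (real k + 1))
       + (\<Sum>k\<in>{2^(m+1)..<2^((m+1)+n)}. (cmod (\<alpha> k))^2 * sqrt (real k + 1))"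
  proof -
    have a: "(2::nat)^m \<le> 2^(m+1)" "(2::nat)^(m+1) \<le> 2^(m+1+n)" by (auto intro: power_increasing)
    show ?thesis using sum.atLeastLessThan_concat[OF a, of "\<lambda>k. (cmod (\<alpha> k))^2 * sqrt (real k + 1)"] by simp
  qed
  have b1: "(\<Sum>k\<in>{2^m..<2^(m+1)}. (cmod (\<alpha> k))^2 * sqrt (real k + 1)) \<le> \<epsilon> / sqrt (2^m)"
    using block_bound[of \<alpha> m] hyp Suc.prems
    by (meson divide_right_mono order.trans real_sqrt_ge_zero zero_le_power zero_le_numeral)
  have b2: "(\<Sum>k\<in>{2^(m+1)..<2^((m+1)+n)}. (cmod (\<alpha> k))^2 * sqrt (real k + 1)) \<le> 4 * \<epsilon> / sqrt (2^(m+1))"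
    using Suc.IH[of "m+1"] Suc.prems by simp
  define q where "q = sqrt ((2::real)^m)"
  have q: "q > 0" unfolding q_def by simp
  have q1: "sqrt (2^(m+1)) = sqrt 2 * q" unfolding q_def by (simp add: real_sqrt_mult)
  have "\<epsilon> / q + 4 * \<epsilon> / (sqrt 2 * q) \<le> 4 * \<epsilon> / q"
  proof -
    have "4 / sqrt 2 \<le> 3" using sqrt2_ge by (simp add: field_simps)
    hence "\<epsilon> * (4 / sqrt 2) \<le> \<epsilon> * 3" using e0 by (intro mult_left_mono)
    hence "\<epsilon> + 4 * \<epsilon> / sqrt 2 \<le> 4 * \<epsilon>" by (simp add: mult_ac)
    hence "(\<epsilon> + 4 * \<epsilon> / sqrt 2) / q \<le> 4 * \<epsilon> / q" using q by (intro divide_right_mono) auto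
    moreover have "(\<epsilon> + 4 * \<epsilon> / sqrt 2) / q = \<epsilon> / q + 4 * \<epsilon> / (sqrt 2 * q)"
      by (simp add: add_divide_distrib divide_divide_eq_left mult.commute)
    ultimately show ?thesis by simp
  qed
  thus ?case using split b1 b2[unfolded q1] unfolding q_def by linarith
qed



lemma tail_bound:
  assumes hyp: "\<forall>m\<ge>M. (sigma \<alpha> m)^2 \<le> \<epsilon>" and L: "2^M \<le> L"
  shows "(\<Sum>k\<in>{L..K}. (cmod (\<alpha> k))^2 * sqrt (real k + 1)) \<le> 4 * sqrt 2 * \<epsilon> / sqrt (real L + 1)"
proof -
  have e0: "\<epsilon> \<ge> 0" using hyp by (metis order.trans order_refl zero_le_power2)
  have "L \<ge> 1" using L by (metis le_trans one_le_power one_le_numeral)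
  then obtain m0 where m0: "2^m0 \<le> L" "L < 2^(m0+1)" using ex_power_ivl1[of 2 L] by auto
  have "M \<le> m0"
  proof (rule ccontr)
    assume "\<not> M \<le> m0"
    hence "(2::nat)^(m0+1) \<le> 2^M" by (intro power_increasing) auto
    thus False using m0 L by linarith
  qed
  have sub: "{L..K} \<subseteq> {2^m0..<2^(m0+(K+1))}"
  proof
    fix k assume k: "k \<in> {L..K}"
    have "K < 2^K" by (rule less_exp)
    also have "(2::nat)^K \<le> 2^(m0+(K+1))" by (intro power_increasing) auto
    finally show "k \<in> {2^m0..<2^(m0+(K+1))}" using k m0 by auto
  qed
  have "(\<Sum>k\<in>{L..K}. (cmod (\<alpha> k))^2 * sqrt (real k + 1))
      \<le> (\<Sum>k\<in>{2^m0..<2^(m0+(K+1))}. (cmod (\<alpha> k))^2 * sqrt (real k + 1))"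
    by (intro sum_mono2 sub) auto
  also have "\<dots> \<le> 4 * \<epsilon> / sqrt (2^m0)" by (rule dyadic_bound[OF hyp \<open>M \<le> m0\<close>])
  also have "\<dots> = 4 * sqrt 2 * \<epsilon> / (sqrt 2 * sqrt (2^m0))" by simp
  also have "\<dots> \<le> 4 * sqrt 2 * \<epsilon> / sqrt (real L + 1)"
  proof (rule divide_left_mono)
    have "real L + 1 \<le> 2 * 2^m0" using m0(2)
      by (metis Suc_leI add.commute of_nat_Suc of_nat_le_iff of_nat_numeral of_nat_power power_Suc Suc_eq_plus1)
    hence "sqrt (real L + 1) \<le> sqrt (2 * 2^m0)" by (rule real_sqrt_le_mono)
    thus "sqrt (real L + 1) \<le> sqrt 2 * sqrt (2^m0)" by (simp add: real_sqrt_mult)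
  qed (use e0 in auto)
  finally show ?thesis .
qed

lemma hardy_tail:
  fixes d :: "nat \<Rightarrow> complex"
  assumes hyp: "\<forall>m\<ge>M. (sigma \<alpha> m)^2 \<le> \<epsilon>"
  shows "(\<Sum>k\<in>{2^M..K}. (cmod (\<alpha> k))^2 * (cmod (\<Sum>j\<le>k. d j))^2)
           \<le> 8 * sqrt 2 * \<epsilon> * (\<Sum>j\<le>K. (cmod (d j))^2)"
proof -
  have e0: "\<epsilon> \<ge> 0" using hyp by (metis order.trans order_refl zero_le_power2)
  define a where "a k = (cmod (\<alpha> k))^2" for k
  define w where "w j = sqrt (real j + 1) * (cmod (d j))^2" for j
  have a0: "a k \<ge> 0" for k unfolding a_def by simp
  have w0: "w j \<ge> 0" for j unfolding w_def by simp
  have "(\<Sum>k\<in>{2^M..K}. a k * (cmod (\<Sum>j\<le>k. d j))^2)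
      \<le> (\<Sum>k\<in>{2^M..K}. a k * (2 * sqrt (real k + 1) * (\<Sum>j\<le>k. w j)))"
    unfolding w_def by (intro sum_mono mult_left_mono cs_partial a0)
  also have "\<dots> = 2 * (\<Sum>k\<in>{2^M..K}. \<Sum>j\<in>{j. j \<in> {..K} \<and> j \<le> k}. a k * sqrt (real k + 1) * w j)"
  proof -
    have "(\<Sum>k\<in>{2^M..K}. a k * (2 * sqrt (real k + 1) * (\<Sum>j\<le>k. w j)))
       = (\<Sum>k\<in>{2^M..K}. 2 * (\<Sum>j\<in>{j. j \<in> {..K} \<and> j \<le> k}. a k * sqrt (real k + 1) * w j))"
    proof (rule sum.cong[OF refl])
      fix k assume "k \<in> {2^M..K}"
      hence eqs: "{j. j \<in> {..K} \<and> j \<le> k} = {..k}" by auto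
      show "a k * (2 * sqrt (real k + 1) * (\<Sum>j\<le>k. w j)) =
            2 * (\<Sum>j\<in>{j. j \<in> {..K} \<and> j \<le> k}. a k * sqrt (real k + 1) * w j)"
      proof (simp only: eqs)
        have "(\<Sum>j\<le>k. a k * sqrt (real k + 1) * w j) = a k * sqrt (real k + 1) * (\<Sum>j\<le>k. w j)"
          by (simp add: sum_distrib_left)
        thus "a k * (2 * sqrt (real k + 1) * (\<Sum>j\<le>k. w j)) = 2 * (\<Sum>j\<le>k. a k * sqrt (real k + 1) * w j)"
          by simp
      qed
    qed
    thus ?thesis by (simp add: sum_distrib_left)
  qed
  also have "\<dots> = 2 * (\<Sum>j\<le>K. \<Sum>k\<in>{k. k \<in> {2^M..K} \<and> j \<le> k}. a k * sqrt (real k + 1) * w j)"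
    by (subst sum.swap_restrict) auto
  also have "\<dots> = 2 * (\<Sum>j\<le>K. w j * (\<Sum>k\<in>{max j (2^M)..K}. a k * sqrt (real k + 1)))"
  proof -
    have "{k. k \<in> {2^M..K} \<and> j \<le> k} = {max j (2^M)..K}" for j by auto
    thus ?thesis by (simp add: sum_distrib_left sum_distrib_right mult_ac)
  qed
  also have "\<dots> \<le> 2 * (\<Sum>j\<le>K. w j * (4 * sqrt 2 * \<epsilon> / sqrt (real (max j (2^M)) + 1)))"
    unfolding a_def
    by (intro mult_left_mono sum_mono w0 tail_bound[OF hyp]) auto
  also have "\<dots> \<le> 2 * (\<Sum>j\<le>K. (cmod (d j))^2 * (4 * sqrt 2 * \<epsilon>))"
  proof (intro mult_left_mono sum_mono)
    fix j
    have p: "sqrt (real (max j (2^M)) + 1) > 0" by simp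
    have "sqrt (real j + 1) \<le> sqrt (real (max j (2^M)) + 1)" by (intro real_sqrt_le_mono) auto
    hence r: "sqrt (real j + 1) / sqrt (real (max j (2^M)) + 1) \<le> 1" using p by simp
    have "w j * (4 * sqrt 2 * \<epsilon> / sqrt (real (max j (2^M)) + 1))
        = ((cmod (d j))^2 * (4 * sqrt 2 * \<epsilon>)) * (sqrt (real j + 1) / sqrt (real (max j (2^M)) + 1))"
      unfolding w_def by (simp add: field_simps)
    also have "\<dots> \<le> ((cmod (d j))^2 * (4 * sqrt 2 * \<epsilon>)) * 1"
      by (intro mult_left_mono r) (use e0 in auto)
    finally show "w j * (4 * sqrt 2 * \<epsilon> / sqrt (real (max j (2^M)) + 1)) \<le> (cmod (d j))^2 * (4 * sqrt 2 * \<epsilon>)" by simp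
  qed auto
  also have "\<dots> = 8 * sqrt 2 * \<epsilon> * (\<Sum>j\<le>K. (cmod (d j))^2)"
    by (simp add: sum_distrib_left sum_distrib_right mult_ac)
  finally show ?thesis unfolding a_def .
qed



lemma rhaly_sq: "(cmod (rhaly \<alpha> d k))^2 = (cmod (\<alpha> k))^2 * (cmod (\<Sum>j\<le>k. d j))^2"
  by (simp add: rhaly_def norm_mult power_mult_distrib)

lemma rhaly_diff: "rhaly \<alpha> f - rhaly \<alpha> g = rhaly \<alpha> (f - g)"
  by (auto simp: rhaly_def fun_eq_iff sum_subtractf right_diff_distrib)

lemma split_bound:
  fixes d :: "nat \<Rightarrow> complex"
  assumes hyp: "\<forall>m\<ge>M. (sigma \<alpha> m)^2 \<le> \<epsilon>"
  shows "(\<Sum>k\<le>K. (cmod (rhaly \<alpha> d k))^2)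
     \<le> (\<Sum>k<2^M. (cmod (rhaly \<alpha> d k))^2) + 8 * sqrt 2 * \<epsilon> * (\<Sum>j\<le>K. (cmod (d j))^2)"
proof -
  have "(\<Sum>k\<le>K. (cmod (rhaly \<alpha> d k))^2) \<le> (\<Sum>k\<in>{..<2^M} \<union> {2^M..K}. (cmod (rhaly \<alpha> d k))^2)"
    by (intro sum_mono2) auto
  also have "\<dots> = (\<Sum>k<2^M. (cmod (rhaly \<alpha> d k))^2) + (\<Sum>k\<in>{2^M..K}. (cmod (rhaly \<alpha> d k))^2)"
    by (intro sum.union_disjoint) auto
  also have "(\<Sum>k\<in>{2^M..K}. (cmod (rhaly \<alpha> d k))^2) \<le> 8 * sqrt 2 * \<epsilon> * (\<Sum>j\<le>K. (cmod (d j))^2)"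
    unfolding rhaly_sq by (rule hardy_tail[OF hyp])
  finally show ?thesis by simp
qed

lemma l2_partial_le:
  assumes "in_l2 d" "finite A" shows "(\<Sum>j\<in>A. (cmod (d j))^2) \<le> (\<Sum>j. (cmod (d j))^2)"
  using assms unfolding in_l2_def by (intro sum_le_suminf) auto

lemma rhaly_l2:
  fixes d :: "nat \<Rightarrow> complex"
  assumes hyp: "\<forall>m. (sigma \<alpha> m)^2 \<le> E" and d: "in_l2 d"
  shows "in_l2 (rhaly \<alpha> d)"
proof -
  have hyp0: "\<forall>m\<ge>0. (sigma \<alpha> m)^2 \<le> E" using hyp by simp
  have "(\<Sum>k\<le>K. (cmod (rhaly \<alpha> d k))^2)
     \<le> (cmod (\<alpha> 0))^2 * (\<Sum>j. (cmod (d j))^2) + 8 * sqrt 2 * E * (\<Sum>j. (cmod (d j))^2)" for K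
  proof -
    have E0: "E \<ge> 0" using hyp by (metis order.trans zero_le_power2)
    have "(\<Sum>k\<le>K. (cmod (rhaly \<alpha> d k))^2)
       \<le> (\<Sum>k<2^0. (cmod (rhaly \<alpha> d k))^2) + 8 * sqrt 2 * E * (\<Sum>j\<le>K. (cmod (d j))^2)"
      by (rule split_bound[OF hyp0])
    also have "(\<Sum>k<2^0. (cmod (rhaly \<alpha> d k))^2) = (cmod (\<alpha> 0))^2 * (cmod (d 0))^2"
      by (simp add: rhaly_sq)
    also have "(cmod (d 0))^2 \<le> (\<Sum>j. (cmod (d j))^2)"
      using l2_partial_le[OF d, of "{0}"] by simp
    also have "(\<Sum>j\<le>K. (cmod (d j))^2) \<le> (\<Sum>j. (cmod (d j))^2)"
      using l2_partial_le[OF d, of "{..K}"] by simp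
    finally show ?thesis using E0 by (simp add: mult_left_mono)
  qed
  thus ?thesis unfolding in_l2_def by (intro bounded_imp_summable) auto
qed



lemma diag_coord:
  fixes x :: "nat \<Rightarrow> nat \<Rightarrow> complex"
  assumes bnd: "\<And>n j. cmod (x n j) \<le> B"
  shows "\<exists>r. strict_mono r \<and> (\<forall>j. convergent (\<lambda>i. x (r i) j))"
proof -
  interpret subseqs "\<lambda>j s. convergent (\<lambda>i. x (s i) j)"
  proof unfold_locales
    fix j and s :: "nat \<Rightarrow> nat" assume "strict_mono s"
    have "bounded (range (\<lambda>i. x (s i) j))" using bnd unfolding bounded_iff by auto
    then obtain l r where "strict_mono r" "((\<lambda>i. x (s i) j) \<circ> r) \<longlonglongrightarrow> l"
      using bounded_imp_convergent_subsequence by blast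
    thus "\<exists>r'. strict_mono r' \<and> convergent (\<lambda>i. x ((s \<circ> r') i) j)"
      by (auto simp: convergent_def o_def)
  qed
  have "convergent (\<lambda>i. x (diagseq i) j)" for j
  proof -
    have "convergent (\<lambda>i. x ((diagseq \<circ> (+) (Suc j)) i) j)"
    proof (rule diagseq_holds)
      fix r s n assume r: "strict_mono (r :: nat \<Rightarrow> nat)" and c: "convergent (\<lambda>i. x (s i) n)"
      then obtain L where "(\<lambda>i. x (s i) n) \<longlonglongrightarrow> L" by (auto simp: convergent_def)
      from LIMSEQ_subseq_LIMSEQ[OF this r] show "convergent (\<lambda>i. x ((s \<circ> r) i) n)"
        by (auto simp: convergent_def o_def)
    qed
    then obtain L where L: "(\<lambda>i. x (diagseq (Suc j + i)) j) \<longlonglongrightarrow> L" by (auto simp: convergent_def o_def)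
    have "(\<lambda>i. x (diagseq (i + Suc j)) j) \<longlonglongrightarrow> L" using L by (simp add: add.commute)
    hence "(\<lambda>i. x (diagseq i) j) \<longlonglongrightarrow> L" by (rule LIMSEQ_offset)
    thus ?thesis by (auto simp: convergent_def)
  qed
  thus ?thesis using subseq_diagseq by blast
qed

lemma sigma_nonneg: "sigma \<alpha> m \<ge> 0"
  unfolding sigma_def by (intro real_sqrt_ge_zero sum_nonneg) auto

lemma compact_if:
  assumes lim: "sigma \<alpha> \<longlonglongrightarrow> 0"
  shows "compact_op_l2 (rhaly \<alpha>)"
proof -
  obtain E where E: "\<forall>m. (sigma \<alpha> m)^2 \<le> E"
  proof -
    have "Bseq (sigma \<alpha>)" using lim by (rule convergent_imp_Bseq[OF convergentI])
    then obtain K where K: "\<forall>m. norm (sigma \<alpha> m) \<le> K" by (auto simp: Bseq_def)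
    have "(sigma \<alpha> m)^2 \<le> K^2" for m
      using K[rule_format, of m] sigma_nonneg[of \<alpha> m] by (intro power_mono) auto
    thus ?thesis using that by blast
  qed
  have eps: "\<exists>M. \<forall>m\<ge>M. (sigma \<alpha> m)^2 \<le> e" if "e > 0" for e
  proof -
    have "(\<lambda>m. (sigma \<alpha> m)^2) \<longlonglongrightarrow> 0^2" by (intro tendsto_intros lim)
    hence "eventually (\<lambda>m. (sigma \<alpha> m)^2 < e) sequentially" using that by (intro order_tendstoD(2)) auto
    thus ?thesis unfolding eventually_sequentially by (meson less_imp_le)
  qed
  show ?thesis unfolding compact_op_l2_def
  proof (intro conjI allI impI)
    fix f assume "in_l2 f" thus "in_l2 (rhaly \<alpha> f)" by (rule rhaly_l2[OF E])
  next
    fix x :: "nat \<Rightarrow> nat \<Rightarrow> complex"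
    assume "(\<forall>n. in_l2 (x n)) \<and> (\<exists>B. \<forall>n. l2_norm (x n) \<le> B)"
    then obtain B where xl2: "\<And>n. in_l2 (x n)" and xB: "\<And>n. l2_norm (x n) \<le> B" by auto
    have "l2_norm (x 0) \<ge> 0" unfolding l2_norm_def using xl2[of 0] by (simp add: in_l2_def suminf_nonneg)
    hence B0: "B \<ge> 0" using xB[of 0] by linarith
    have sB: "(\<Sum>j. (cmod (x n j))^2) \<le> B^2" for n
    proof -
      have s0: "0 \<le> (\<Sum>j. (cmod (x n j))^2)" using xl2[of n] by (simp add: in_l2_def suminf_nonneg)
      have "sqrt (\<Sum>j. (cmod (x n j))^2) \<le> B" using xB[of n] by (simp add: l2_norm_def)
      hence "(sqrt (\<Sum>j. (cmod (x n j))^2))^2 \<le> B^2" using s0 by (intro power_mono) auto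
      thus ?thesis using s0 by simp
    qed
    have pB: "(\<Sum>j\<in>A. (cmod (x n j))^2) \<le> B^2" if "finite A" for n A
      using l2_partial_le[OF xl2[of n] that] sB[of n] by linarith
    have cB: "cmod (x n j) \<le> B" for n j
    proof -
      have "(cmod (x n j))^2 \<le> B^2" using pB[of "{j}" n] by simp
      thus ?thesis using B0 by (rule power2_le_imp_le)
    qed
    obtain r where r: "strict_mono r" "\<forall>j. convergent (\<lambda>i. x (r i) j)" using diag_coord[of x B] cB by blast
    define y where "y j = lim (\<lambda>i. x (r i) j)" for j
    have xy: "(\<lambda>i. x (r i) j) \<longlonglongrightarrow> y j" for j using r(2) unfolding y_def convergent_LIMSEQ_iff by blast
    have ypB: "(\<Sum>j\<le>K. (cmod (y j))^2) \<le> B^2" for K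
    proof (rule LIMSEQ_le_const2)
      show "(\<lambda>i. \<Sum>j\<le>K. (cmod (x (r i) j))^2) \<longlonglongrightarrow> (\<Sum>j\<le>K. (cmod (y j))^2)" by (intro tendsto_intros xy)
      show "\<exists>N. \<forall>n\<ge>N. (\<Sum>j\<le>K. (cmod (x (r n) j))^2) \<le> B^2" using pB by auto
    qed
    have yl2: "in_l2 y" unfolding in_l2_def by (rule bounded_imp_summable[OF _ ypB]) auto
    define d where "d i = x (r i) - y" for i
    have dB: "(\<Sum>j\<le>K. (cmod (d i j))^2) \<le> 4 * B^2" for i K
    proof -
      have "(cmod (d i j))^2 \<le> 2 * (cmod (x (r i) j))^2 + 2 * (cmod (y j))^2" for j
      proof -
        have "cmod (d i j) \<le> cmod (x (r i) j) + cmod (y j)" unfolding d_def by (simp add: norm_triangle_ineq4)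
        hence "(cmod (d i j))^2 \<le> (cmod (x (r i) j) + cmod (y j))^2" by (intro power_mono) auto
        also have "\<dots> \<le> 2 * (cmod (x (r i) j))^2 + 2 * (cmod (y j))^2"
          using sum_squares_bound[of "cmod (x (r i) j)" "cmod (y j)"] by (simp add: power2_sum)
        finally show ?thesis .
      qed
      hence "(\<Sum>j\<le>K. (cmod (d i j))^2) \<le> (\<Sum>j\<le>K. 2 * (cmod (x (r i) j))^2 + 2 * (cmod (y j))^2)"
        by (intro sum_mono) auto
      also have "\<dots> = 2 * (\<Sum>j\<le>K. (cmod (x (r i) j))^2) + 2 * (\<Sum>j\<le>K. (cmod (y j))^2)"
        by (simp add: sum.distrib sum_distrib_left)
      also have "\<dots> \<le> 2 * B^2 + 2 * B^2" using pB[of "{..K}" "r i"] ypB[of K] by simp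
      finally show ?thesis by simp
    qed
    have dl2: "in_l2 (d i)" for i unfolding in_l2_def by (rule bounded_imp_summable[OF _ dB]) auto
    have Rdl2: "in_l2 (rhaly \<alpha> (d i))" for i by (rule rhaly_l2[OF E dl2])
    define Z where "Z i = (\<Sum>k. (cmod (rhaly \<alpha> (d i) k))^2)" for i
    have Z0: "Z i \<ge> 0" for i unfolding Z_def using Rdl2[of i] by (simp add: in_l2_def suminf_nonneg)
    have Zlim: "Z \<longlonglongrightarrow> 0"
    proof (rule order_tendstoI)
      fix a :: real assume a: "a < 0"
      have "a < Z i" for i using a Z0[of i] by linarith
      thus "eventually (\<lambda>i. a < Z i) sequentially" by simp
    next
      fix e :: real assume e: "0 < e"
      define X where "X = 32 * sqrt 2 * B^2"
      have X0: "X \<ge> 0" unfolding X_def by simp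
      define e' where "e' = e / 2 / (X + 1)"
      have e'0: "e' > 0" unfolding e'_def using e X0 by simp
      obtain M where M: "\<forall>m\<ge>M. (sigma \<alpha> m)^2 \<le> e'" using eps e'0 by blast
      define F where "F i = (\<Sum>k<2^M. (cmod (rhaly \<alpha> (d i) k))^2)" for i
      have dlim: "(\<lambda>i. d i j) \<longlonglongrightarrow> 0" for j
      proof -
        have "(\<lambda>i. x (r i) j - y j) \<longlonglongrightarrow> 0" by (rule LIM_zero[OF xy])
        thus ?thesis unfolding d_def by simp
      qed
      have "F \<longlonglongrightarrow> (\<Sum>k<2^M. (cmod (\<alpha> k * (\<Sum>j\<le>k. 0)))^2)"
        unfolding F_def rhaly_def by (intro tendsto_intros dlim)
      hence Flim: "F \<longlonglongrightarrow> 0" by simp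
      hence Fev: "eventually (\<lambda>i. F i < e/2) sequentially" using e by (intro order_tendstoD(2)) auto
      have bnd: "Z i \<le> F i + e/2" for i
      proof -
        have "Z i \<le> F i + 8 * sqrt 2 * e' * (4 * B^2)" unfolding Z_def
        proof (rule suminf_le_const)
          show "summable (\<lambda>k. (cmod (rhaly \<alpha> (d i) k))^2)" using Rdl2[of i] by (simp add: in_l2_def)
          fix n
          have "(\<Sum>k<n. (cmod (rhaly \<alpha> (d i) k))^2) \<le> (\<Sum>k\<le>n. (cmod (rhaly \<alpha> (d i) k))^2)"
            by (intro sum_mono2) auto
          also have "\<dots> \<le> F i + 8 * sqrt 2 * e' * (\<Sum>j\<le>n. (cmod (d i j))^2)"
            unfolding F_def by (rule split_bound[OF M])
          also have "\<dots> \<le> F i + 8 * sqrt 2 * e' * (4 * B^2)"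
            using dB e'0 by (intro add_left_mono mult_left_mono) auto
          finally show "(\<Sum>k<n. (cmod (rhaly \<alpha> (d i) k))^2) \<le> F i + 8 * sqrt 2 * e' * (4 * B^2)" .
        qed
        also have "8 * sqrt 2 * e' * (4 * B^2) = X * e'" unfolding X_def by simp
        also have "X * e' \<le> (X + 1) * e'" using e'0 by simp
        also have "(X + 1) * e' = e / 2" unfolding e'_def using X0 by (simp add: field_simps)
        finally show ?thesis by simp
      qed
      show "eventually (\<lambda>i. Z i < e) sequentially"
      proof (rule eventually_mono[OF Fev])
        fix i assume "F i < e/2" thus "Z i < e" using bnd[of i] by linarith
      qed
    qed
    have "(\<lambda>i. l2_norm (rhaly \<alpha> (x (r i)) - rhaly \<alpha> y)) \<longlonglongrightarrow> 0"
    proof -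
      have "l2_norm (rhaly \<alpha> (x (r i)) - rhaly \<alpha> y) = sqrt (Z i)" for i
        unfolding l2_norm_def Z_def d_def rhaly_diff ..
      moreover have "(\<lambda>i. sqrt (Z i)) \<longlonglongrightarrow> sqrt 0" by (intro tendsto_intros Zlim)
      ultimately show ?thesis by simp
    qed
    thus "\<exists>r g. strict_mono r \<and> in_l2 g \<and> (\<lambda>n. l2_norm (rhaly \<alpha> (x (r n)) - g)) \<longlonglongrightarrow> 0"
      using r(1) rhaly_l2[OF E yl2] by blast
  qed
qed



lemma l2_diff:
  fixes u v :: "nat \<Rightarrow> complex"
  assumes "in_l2 u" "in_l2 v" shows "in_l2 (u - v)"
  unfolding in_l2_def
proof (rule summable_comparison_test)
  show "summable (\<lambda>n. 2 * (cmod (u n))^2 + 2 * (cmod (v n))^2)"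
    using assms unfolding in_l2_def by (intro summable_add summable_mult)
  have "(cmod ((u - v) n))^2 \<le> 2 * (cmod (u n))^2 + 2 * (cmod (v n))^2" for n
  proof -
    have "cmod ((u - v) n) \<le> cmod (u n) + cmod (v n)" by (simp add: norm_triangle_ineq4)
    hence "(cmod ((u - v) n))^2 \<le> (cmod (u n) + cmod (v n))^2" by (intro power_mono) auto
    also have "\<dots> \<le> 2 * (cmod (u n))^2 + 2 * (cmod (v n))^2"
      using sum_squares_bound[of "cmod (u n)" "cmod (v n)"] by (simp add: power2_sum)
    finally show ?thesis .
  qed
  thus "\<exists>N. \<forall>n\<ge>N. norm ((cmod ((u - v) n))^2) \<le> 2 * (cmod (u n))^2 + 2 * (cmod (v n))^2"
    by auto
qed

lemma l2_coord:
  fixes h :: "nat \<Rightarrow> complex"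
  assumes "in_l2 h" shows "cmod (h j) \<le> l2_norm h"
proof -
  have "(cmod (h j))^2 \<le> (\<Sum>i. (cmod (h i))^2)" using l2_partial_le[OF assms, of "{j}"] by simp
  hence "sqrt ((cmod (h j))^2) \<le> l2_norm h" unfolding l2_norm_def by (rule real_sqrt_le_mono)
  thus ?thesis by simp
qed

lemma compact_only_if:
  assumes C: "compact_op_l2 (rhaly \<alpha>)"
  shows "sigma \<alpha> \<longlonglongrightarrow> 0"
proof (rule ccontr)
  assume nc: "\<not> sigma \<alpha> \<longlonglongrightarrow> 0"
  have "\<exists>e>0. infinite {m. sigma \<alpha> m \<ge> e}"
  proof (rule ccontr)
    assume "\<not> (\<exists>e>0. infinite {m. sigma \<alpha> m \<ge> e})"
    hence fin: "\<And>e. e > 0 \<Longrightarrow> finite {m. sigma \<alpha> m \<ge> e}" by auto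
    have "sigma \<alpha> \<longlonglongrightarrow> 0"
    proof (rule order_tendstoI)
      fix a :: real assume a: "a < 0"
      have "a < sigma \<alpha> m" for m using a sigma_nonneg[of \<alpha> m] by linarith
      thus "eventually (\<lambda>m. a < sigma \<alpha> m) sequentially" by simp
    next
      fix a :: real assume "a > 0"
      hence "finite {m. sigma \<alpha> m \<ge> a}" by (rule fin)
      hence "eventually (\<lambda>m. \<not> (sigma \<alpha> m \<ge> a)) cofinite" by (simp add: eventually_cofinite)
      thus "eventually (\<lambda>m. sigma \<alpha> m < a) sequentially" by (simp add: cofinite_eq_sequentially not_le)
    qed
    with nc show False by simp
  qed
  then obtain e where e: "e > 0" "infinite {m. sigma \<alpha> m \<ge> e}" by blast
  obtain s :: "nat \<Rightarrow> nat" where s1: "strict_mono s" and s2': "\<forall>n. s n \<in> {m. sigma \<alpha> m \<ge> e}" using infinite_enumerate[OF e(2)] by blast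
  have s: "strict_mono s" "\<And>n. sigma \<alpha> (s n) \<ge> e" using s1 s2' by auto
  define c :: "nat \<Rightarrow> real" where "c k = 1 / sqrt (2^k :: real)" for k
  define f :: "nat \<Rightarrow> nat \<Rightarrow> complex" where "f k j = (if j < 2^k then complex_of_real (c k) else 0)" for k j
  have fl2: "in_l2 (f k)" for k unfolding in_l2_def by (rule summable_finite[of "{..<2^k}"]) (auto simp: f_def)
  have ck2: "(c k)^2 = 1 / 2^k" for k
  proof -
    have "(sqrt (2^k::real))^2 = 2^k" by (rule real_sqrt_pow2) simp
    thus ?thesis unfolding c_def by (simp add: power_divide)
  qed
  have fnorm: "l2_norm (f k) = 1" for k
  proof -
    have "(\<Sum>j. (cmod (f k j))^2) = (\<Sum>j<2^k. (cmod (f k j))^2)" by (rule suminf_finite) (auto simp: f_def)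
    also have "\<dots> = (\<Sum>j<(2::nat)^k. (c k)^2)" by (simp add: f_def)
    also have "\<dots> = 1" by (simp add: ck2)
    finally show ?thesis by (simp add: l2_norm_def)
  qed
  from C have Rl2: "\<And>g. in_l2 g \<Longrightarrow> in_l2 (rhaly \<alpha> g)" unfolding compact_op_l2_def by blast
  have hx: "(\<forall>n. in_l2 (f (s n))) \<and> (\<exists>B. \<forall>n. l2_norm (f (s n)) \<le> B)" using fl2 fnorm by auto
  have "\<exists>(r::nat\<Rightarrow>nat) g. strict_mono r \<and> in_l2 g \<and> (\<lambda>n. l2_norm (rhaly \<alpha> (f (s (r n))) - g)) \<longlonglongrightarrow> 0"
    using C[unfolded compact_op_l2_def, THEN conjunct2, rule_format, of "\<lambda>n. f (s n)", OF hx] by simp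
  then obtain r :: "nat \<Rightarrow> nat" and g where r: "strict_mono r" "in_l2 g"
      "(\<lambda>n. l2_norm (rhaly \<alpha> (f (s (r n))) - g)) \<longlonglongrightarrow> 0"
    by blast
  have g0: "g j = 0" for j
  proof -
    have "(\<lambda>n. rhaly \<alpha> (f (s (r n))) j - g j) \<longlonglongrightarrow> 0"
    proof (rule Lim_null_comparison[OF _ r(3)])
      have "cmod (rhaly \<alpha> (f (s (r n))) j - g j) \<le> l2_norm (rhaly \<alpha> (f (s (r n))) - g)" for n
        using l2_coord[OF l2_diff[OF Rl2[OF fl2[of "s (r n)"]] r(2)], of j] by simp
      thus "eventually (\<lambda>n. norm (rhaly \<alpha> (f (s (r n))) j - g j) \<le> l2_norm (rhaly \<alpha> (f (s (r n))) - g)) sequentially"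
        by simp
    qed
    hence l1: "(\<lambda>n. rhaly \<alpha> (f (s (r n))) j) \<longlonglongrightarrow> g j" by (rule LIM_zero_cancel)
    have cl: "c \<longlonglongrightarrow> 0"
    proof -
      have "(\<lambda>k. inverse (sqrt 2 ^ k)) \<longlonglongrightarrow> 0" by (rule LIMSEQ_inverse_realpow_zero) simp
      moreover have "inverse (sqrt 2 ^ k) = c k" for k by (simp add: c_def real_sqrt_power divide_inverse)
      ultimately show ?thesis by simp
    qed
    have "(\<lambda>k. \<alpha> j * complex_of_real ((real j + 1) * c k)) \<longlonglongrightarrow> \<alpha> j * complex_of_real ((real j + 1) * 0)"
      by (intro tendsto_intros cl)
    hence "(\<lambda>k. \<alpha> j * complex_of_real ((real j + 1) * c k)) \<longlonglongrightarrow> 0" by simp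
    moreover have "eventually (\<lambda>k. \<alpha> j * complex_of_real ((real j + 1) * c k) = rhaly \<alpha> (f k) j) sequentially"
    proof (rule eventually_mono[OF eventually_ge_at_top[of j]])
      fix k assume "j \<le> k"
      hence "j < 2^k" using less_exp[of j] power_increasing[of j k "2::nat"] by linarith
      hence "(\<Sum>i\<le>j. f k i) = (\<Sum>i\<le>j. complex_of_real (c k))"
        by (intro sum.cong) (auto simp: f_def)
      hence "(\<Sum>i\<le>j. f k i) = of_nat (Suc j) * complex_of_real (c k)" by simp
      thus "\<alpha> j * complex_of_real ((real j + 1) * c k) = rhaly \<alpha> (f k) j"
        by (simp add: rhaly_def)
    qed
    ultimately have "(\<lambda>k. rhaly \<alpha> (f k) j) \<longlonglongrightarrow> 0" by (rule Lim_transform_eventually)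
    from LIMSEQ_subseq_LIMSEQ[OF this strict_mono_o[OF s(1) r(1)]]
    have "(\<lambda>n. rhaly \<alpha> (f (s (r n))) j) \<longlonglongrightarrow> 0" by (simp add: o_def)
    from LIMSEQ_unique[OF l1 this] show ?thesis .
  qed
  hence "rhaly \<alpha> (f (s (r n))) - g = rhaly \<alpha> (f (s (r n)))" for n by (simp add: fun_eq_iff)
  with r(3) have nl: "(\<lambda>n. l2_norm (rhaly \<alpha> (f (s (r n))))) \<longlonglongrightarrow> 0" by simp
  have lower: "l2_norm (rhaly \<alpha> (f k)) \<ge> sigma \<alpha> k / sqrt 2" for k
  proof -
    have "((2::real)^k * c k)^2 = (2^k)^2 * (c k)^2" by (rule power_mult_distrib)
    also have "\<dots> = (2^k)^2 * (1 / 2^k)" by (simp only: ck2)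
    also have "\<dots> = 2^k" by (simp add: power2_eq_square)
    finally have q2: "((2::real)^k * c k)^2 = 2^k" .
    have blk: "(cmod (rhaly \<alpha> (f k) j))^2 \<ge> real (j+1) * (cmod (\<alpha> j))^2 / 2" if j: "j \<in> {2^k..<2^(k+1)}" for j
    proof -
      have "(\<Sum>i\<le>j. f k i) = (\<Sum>i<2^k. f k i)"
        using j by (intro sum.mono_neutral_right) (auto simp: f_def)
      also have "\<dots> = (\<Sum>i<(2::nat)^k. complex_of_real (c k))"
        by (intro sum.cong) (auto simp: f_def)
      also have "\<dots> = complex_of_real (2^k * c k)" by simp
      finally have S: "(\<Sum>i\<le>j. f k i) = complex_of_real (2^k * c k)" .
      have "(cmod (rhaly \<alpha> (f k) j))^2 = (cmod (\<alpha> j))^2 * 2^k"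
        unfolding rhaly_sq S norm_of_real power2_abs q2 ..
      moreover have "real (j+1) \<le> 2 * 2^k"
      proof -
        have "j + 1 \<le> 2 * 2^k" using j by simp
        hence "real (j+1) \<le> real (2 * 2^k)" by (simp only: of_nat_le_iff)
        thus ?thesis by simp
      qed
      hence "real (j+1) * (cmod (\<alpha> j))^2 \<le> (2 * 2^k) * (cmod (\<alpha> j))^2" by (rule mult_right_mono) simp
      ultimately show ?thesis by (simp add: mult_ac)
    qed
    have "(sigma \<alpha> k)^2 / 2 = (\<Sum>j\<in>{2^k..<2^(k+1)}. real (j+1) * (cmod (\<alpha> j))^2 / 2)"
      by (simp add: sigma_sq sum_divide_distrib)
    also have "\<dots> \<le> (\<Sum>j\<in>{2^k..<2^(k+1)}. (cmod (rhaly \<alpha> (f k) j))^2)" by (intro sum_mono blk)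
    also have "\<dots> \<le> (\<Sum>j. (cmod (rhaly \<alpha> (f k) j))^2)" by (rule l2_partial_le[OF Rl2[OF fl2[of k]]]) simp
    finally have "sqrt ((sigma \<alpha> k)^2 / 2) \<le> l2_norm (rhaly \<alpha> (f k))"
      unfolding l2_norm_def by (rule real_sqrt_le_mono)
    thus ?thesis using sigma_nonneg[of \<alpha> k] by (simp add: real_sqrt_divide)
  qed
  have "eventually (\<lambda>n. l2_norm (rhaly \<alpha> (f (s (r n)))) < e / sqrt 2) sequentially"
    using e(1) by (intro order_tendstoD(2)[OF nl]) simp
  then obtain n where "l2_norm (rhaly \<alpha> (f (s (r n)))) < e / sqrt 2" by (auto simp: eventually_sequentially)
  moreover have "e / sqrt 2 \<le> sigma \<alpha> (s (r n)) / sqrt 2" using s(2) by (simp add: divide_right_mono)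
  ultimately show False using lower[of "s (r n)"] by linarith
qed

theorem theorem2p7:
  fixes \<alpha> :: "nat \<Rightarrow> complex"
  assumes "in_l2 \<alpha>"
  shows "compact_op_l2 (rhaly \<alpha>) \<longleftrightarrow> (sigma \<alpha> \<longlonglongrightarrow> 0)"
  using compact_only_if compact_if by blast


end
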